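(* Let $\sigma(x)=\sum_{k=0}^\infty\sigma_kL_k(x)$ on $I=(-1,1)$, and for $m,n\ge2$ let $a^{(0)}_{m,n}:=\int_{-1}^1\sigma(x)\,\eta_m(x)\,\eta_n(x)\,dx$. If there exist $\eta>0$ and a constant $C_\eta>0$ depending only on $\eta$ such that $|\sigma_k|\le C_\eta e^{-\eta k}$ for all $k\ge0$, then $$|a^{(0)}_{m,n}|\le Ce^{-\eta|n-m|}\qquad\forall\, n,m\ge2,$$ where $C$ is a constant depending only on $\eta$.
   Context: $I=(-1,1)$. $L_k$ denotes the Legendre polynomial of degree $k$ normalized by $L_k(1)=1$. The Babuška–Shen basis is $\eta_k(x)=\frac{1}{\sqrt{4k-2}}(L_{k-2}(x)-L_k(x))$, $k\ge2$. *)

theory Defs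
  imports "HOL-Analysis.Analysis"
begin

text \<open>Legendre polynomials normalised by L_k(1) = 1, via Bonnet's recurrence
  (n+2) L_{n+2}(x) = (2n+3) x L_{n+1}(x) - (n+1) L_n(x).\<close>
fun legendre :: "nat \<Rightarrow> real \<Rightarrow> real" where
  "legendre 0 x = 1"
| "legendre (Suc 0) x = x"
| "legendre (Suc (Suc n)) x =
     ((2 * real n + 3) * x * legendre (Suc n) x - (real n + 1) * legendre n x) / (real n + 2)"

definition bs_eta :: "nat \<Rightarrow> real \<Rightarrow> real" where
  "bs_eta k x = (legendre (k - 2) x - legendre k x) / sqrt (4 * real k - 2)"

definition legendre_series :: "(nat \<Rightarrow> real) \<Rightarrow> real \<Rightarrow> real" where
  "legendre_series s x = (\<Sum>k. s k * legendre k x)"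

definition a0 :: "(nat \<Rightarrow> real) \<Rightarrow> nat \<Rightarrow> nat \<Rightarrow> real" where
  "a0 s m n = integral {-1..1} (\<lambda>x. legendre_series s x * bs_eta m x * bs_eta n x)"

end

theory Submission
  imports Defs "HOL-Computational_Algebra.Polynomial"
begin

fun Lp :: "nat \<Rightarrow> real poly" where
  "Lp 0 = 1"
| "Lp (Suc 0) = [:0,1:]"
| "Lp (Suc (Suc n)) = smult (1 / (real n + 2)) (smult (2 * real n + 3) ([:0,1:] * Lp (Suc n)) - smult (real n + 1) (Lp n))"

lemma poly_Lp: "poly (Lp n) x = legendre n x"
  by (induction n rule: Lp.induct) (simp_all add: field_simps)

definition dL :: "nat \<Rightarrow> real \<Rightarrow> real" where "dL n x = poly (pderiv (Lp n)) x"
definition ddL :: "nat \<Rightarrow> real \<Rightarrow> real" where "ddL n x = poly (pderiv (pderiv (Lp n))) x"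

lemma dL_0: "dL 0 x = 0" by (simp add: dL_def)
lemma dL_1: "dL (Suc 0) x = 1" by (simp add: dL_def pderiv_pCons)
lemma dL_rec: "dL (Suc (Suc n)) x = ((2 * real n + 3) * (legendre (Suc n) x + x * dL (Suc n) x) - (real n + 1) * dL n x) / (real n + 2)"
  by (simp add: dL_def pderiv_smult pderiv_diff pderiv_mult pderiv_pCons poly_Lp field_simps)

lemma ids: "x * dL (Suc n) x - dL n x = (real n + 1) * legendre (Suc n) x
     \<and> dL (Suc n) x - x * dL n x = (real n + 1) * legendre n x
     \<and> (x^2 - 1) * dL (Suc n) x = (real n + 1) * (x * legendre (Suc n) x - legendre n x)"
proof (induction n)
  case 0 then show ?case by (simp add: dL_0 dL_1 power2_eq_square)
next
  case (Suc n)
  then have A: "x * dL (Suc n) x - dL n x = (real n + 1) * legendre (Suc n) x"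
    and C: "(x^2 - 1) * dL (Suc n) x = (real n + 1) * (x * legendre (Suc n) x - legendre n x)" by auto
  have B: "dL (Suc (Suc n)) x - x * dL (Suc n) x = (real n + 2) * legendre (Suc n) x"
    using A by (simp add: dL_rec field_simps)
  have A2: "x * dL (Suc (Suc n)) x - dL (Suc n) x = (real n + 2) * legendre (Suc (Suc n)) x"
  proof -
    have "x * dL (Suc (Suc n)) x - dL (Suc n) x = (x^2-1) * dL (Suc n) x + (real n + 2) * x * legendre (Suc n) x"
      using B by (simp add: algebra_simps power2_eq_square)
    also have "\<dots> = (real n + 1) * (x * legendre (Suc n) x - legendre n x) + (real n + 2) * x * legendre (Suc n) x"
      using C by simp
    also have "\<dots> = (real n + 2) * legendre (Suc (Suc n)) x"
      by (simp add: field_simps)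
    finally show ?thesis .
  qed
  have C2: "(x^2 - 1) * dL (Suc (Suc n)) x = (real n + 2) * (x * legendre (Suc (Suc n)) x - legendre (Suc n) x)"
  proof -
    have "(x^2 - 1) * dL (Suc (Suc n)) x = x * (x * dL (Suc (Suc n)) x) - dL (Suc (Suc n)) x"
      by (simp add: algebra_simps power2_eq_square)
    also have "\<dots> = (real n + 2) * (x * legendre (Suc (Suc n)) x - legendre (Suc n) x)"
      using A2 B by (simp add: algebra_simps)
    finally show ?thesis .
  qed
  show ?case using A2 B C2 by (simp add: add.commute)
qed

lemma poly_C: "[:-1,0,1:] * pderiv (Lp (Suc n)) = smult (real n + 1) ([:0,1:] * Lp (Suc n) - Lp n)"
proof -
  have "poly ([:-1,0,1:] * pderiv (Lp (Suc n))) x = poly (smult (real n + 1) ([:0,1:] * Lp (Suc n) - Lp n)) x" for x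
  proof -
    have e1: "poly ([:-1,0,1:] * pderiv (Lp (Suc n))) x = (x^2 - 1) * dL (Suc n) x"
      by (simp add: dL_def power2_eq_square algebra_simps)
    have e2: "poly (smult (real n + 1) ([:0,1:] * Lp (Suc n) - Lp n)) x = (real n + 1) * (x * legendre (Suc n) x - legendre n x)"
      by (simp add: poly_Lp)
    show ?thesis unfolding e1 e2 using ids[of x n] by blast
  qed
  then show ?thesis using poly_eq_poly_eq_iff by blast
qed

lemma ode: "(x^2 - 1) * ddL (Suc n) x + 2 * x * dL (Suc n) x = (real n + 1) * (real n + 2) * legendre (Suc n) x"
proof -
  have "poly (pderiv ([:-1,0,1:] * pderiv (Lp (Suc n)))) x = poly (pderiv (smult (real n + 1) ([:0,1:] * Lp (Suc n) - Lp n))) x"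
    by (simp only: poly_C)
  moreover have "poly (pderiv ([:-1,0,1:] * pderiv (Lp (Suc n)))) x = (x^2 - 1) * ddL (Suc n) x + 2 * x * dL (Suc n) x"
  proof -
    have p1: "poly [:-1,0,1:] x = x^2 - 1" by (simp add: power2_eq_square)
    have p2: "poly (pderiv [:-1,0,1:]) x = 2 * x" by (simp add: pderiv_pCons)
    show ?thesis unfolding pderiv_mult poly_add poly_mult p1 p2 dL_def ddL_def by simp
  qed
  moreover have "poly (pderiv (smult (real n + 1) ([:0,1:] * Lp (Suc n) - Lp n))) x = (real n + 1) * (legendre (Suc n) x + x * dL (Suc n) x - dL n x)"
    by (simp add: pderiv_mult pderiv_smult pderiv_diff pderiv_pCons dL_def poly_Lp algebra_simps)
  ultimately have "(x^2 - 1) * ddL (Suc n) x + 2 * x * dL (Suc n) x = (real n + 1) * (legendre (Suc n) x + x * dL (Suc n) x - dL n x)"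
    by simp
  also have "\<dots> = (real n + 1) * (real n + 2) * legendre (Suc n) x"
  proof -
    have h: "dL n x = x * dL (Suc n) x - (real n + 1) * legendre (Suc n) x" using ids[of x n] by simp
    show ?thesis by (simp only: h) (simp add: algebra_simps)
  qed
  finally show ?thesis .
qed

lemma legendre_deriv: "(legendre n has_real_derivative dL n x) (at x)"
proof -
  have "legendre n = poly (Lp n)" by (simp add: fun_eq_iff poly_Lp)
  then show ?thesis unfolding dL_def by (metis poly_DERIV)
qed

lemma dL_deriv: "(dL n has_real_derivative ddL n x) (at x)"
proof -
  have "dL n = poly (pderiv (Lp n))" by (simp add: fun_eq_iff dL_def)
  then show ?thesis unfolding ddL_def by (metis poly_DERIV)
qed

lemma legendre_pm1: "legendre n 1 = 1 \<and> legendre n (-1) = (-1)^n"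
  by (induction n rule: Lp.induct) (simp_all add: field_simps)

lemma legendre_bound:
  assumes "-1 \<le> x" "x \<le> 1"
  shows "\<bar>legendre n x\<bar> \<le> 1"
proof (cases n)
  case 0 then show ?thesis by simp
next
  case (Suc m)
  define c where "c = (real m + 1) * (real m + 2)"
  have c: "c > 0" unfolding c_def by (intro mult_pos_pos) auto
  define f where "f = (\<lambda>x. (legendre (Suc m) x)^2 + (1 - x^2) * (dL (Suc m) x)^2 / c)"
  define f' where "f' = (\<lambda>x. 2 * x * (dL (Suc m) x)^2 / c)"
  have fd: "(f has_real_derivative f' y) (at y)" for y
  proof -
    have "(f has_real_derivative 2 * legendre (Suc m) y * dL (Suc m) y + ((- (2 * y)) * (dL (Suc m) y)^2 + (1 - y^2) * (2 * dL (Suc m) y * ddL (Suc m) y)) / c) (at y)"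
      unfolding f_def using c
      by (auto intro!: derivative_eq_intros legendre_deriv dL_deriv simp: power2_eq_square)
    moreover have "2 * legendre (Suc m) y * dL (Suc m) y + ((- (2 * y)) * (dL (Suc m) y)^2 + (1 - y^2) * (2 * dL (Suc m) y * ddL (Suc m) y)) / c = f' y"
    proof -
      have o: "(1 - y^2) * ddL (Suc m) y = 2 * y * dL (Suc m) y - c * legendre (Suc m) y"
        using ode[where x=y and n=m] by (simp add: c_def algebra_simps)
      have "(1 - y^2) * (2 * dL (Suc m) y * ddL (Suc m) y) = 2 * dL (Suc m) y * ((1 - y^2) * ddL (Suc m) y)"
        by (simp add: algebra_simps)
      also have "\<dots> = 2 * dL (Suc m) y * (2 * y * dL (Suc m) y - c * legendre (Suc m) y)" by (simp add: o)
      finally show ?thesis using c unfolding f'_def by (simp add: field_simps power2_eq_square)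
    qed
    ultimately show ?thesis by simp
  qed
  have f1: "f 1 = 1" "f (-1) = 1"
    using legendre_pm1[of "Suc m"] by (simp_all add: f_def flip: power_mult)
  have "f x \<le> 1"
  proof (cases "x \<ge> 0")
    case True
    have "f x \<le> f 1"
      by (rule deriv_nonneg_imp_mono[of x 1 f f']) (use fd c True in \<open>auto simp: f'_def\<close>, use assms in auto)
    then show ?thesis using f1 by simp
  next
    case False
    have "f x \<le> f (-1)"
    proof (rule deriv_nonpos_imp_antimono[of "-1" x f f'])
      fix y assume "y \<in> {-1..x}"
      then have "2 * y \<le> 0" using False by auto
      then have "2 * y * (dL (Suc m) y)^2 \<le> 0" by (simp add: mult_nonpos_nonneg)
      then show "f' y \<le> 0" unfolding f'_def using c by (simp add: divide_nonpos_pos)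
    qed (use fd assms in auto)
    then show ?thesis using f1 by simp
  qed
  moreover have "(1 - x^2) * (dL (Suc m) x)^2 / c \<ge> 0"
  proof -
    have "x^2 \<le> 1" using assms by (simp add: abs_square_le_1)
    then show ?thesis using c by (intro divide_nonneg_pos mult_nonneg_nonneg) auto
  qed
  ultimately have "(legendre (Suc m) x)^2 \<le> 1" unfolding f_def by linarith
  then show ?thesis using Suc by (simp add: abs_square_le_1)
qed

lemma legendre_poly_fun: "legendre n = poly (Lp n)"
  by (simp add: fun_eq_iff poly_Lp)

lemma continuous_on_legendre [continuous_intros]: "continuous_on S (legendre n)"
  unfolding legendre_poly_fun by (intro continuous_intros)

lemma dL_integral: "(dL n has_integral (legendre n 1 - legendre n (-1))) {-1..1}"
proof (rule fundamental_theorem_of_calculus)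
  fix x :: real
  show "(legendre n has_vector_derivative dL n x) (at x within {-1..1})"
    using legendre_deriv[of n x] has_real_derivative_iff_has_vector_derivative has_vector_derivative_at_within by blast
qed simp

lemma legendre_int0: "((\<lambda>x. legendre (Suc k) x) has_integral 0) {-1..1}"
proof -
  have h: "dL (Suc (Suc k)) x - dL k x = (2 * real k + 3) * legendre (Suc k) x" for x
  proof -
    have a: "x * dL (Suc k) x - dL k x = (real k + 1) * legendre (Suc k) x" using ids[of x k] by blast
    have b: "dL (Suc (Suc k)) x - x * dL (Suc k) x = (real (Suc k) + 1) * legendre (Suc k) x" using ids[of x "Suc k"] by blast
    show ?thesis using a b by (simp add: algebra_simps)
  qed
  have "((\<lambda>x. dL (Suc (Suc k)) x - dL k x) has_integral
         ((legendre (Suc (Suc k)) 1 - legendre (Suc (Suc k)) (-1)) - (legendre k 1 - legendre k (-1)))) {-1..1}"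
    by (intro has_integral_diff dL_integral)
  also have "((legendre (Suc (Suc k)) 1 - legendre (Suc (Suc k)) (-1)) - (legendre k 1 - legendre k (-1))) = 0"
    using legendre_pm1[of k] legendre_pm1[of "Suc (Suc k)"] by simp
  finally have "((\<lambda>x. (2 * real k + 3) * legendre (Suc k) x) has_integral 0) {-1..1}"
    unfolding h .
  then have "((\<lambda>x. (2 * real k + 3) * legendre (Suc k) x / (2 * real k + 3)) has_integral 0 / (2 * real k + 3)) {-1..1}"
    by (rule has_integral_divide)
  moreover have "(2 * real k + 3) \<noteq> 0" by linarith
  ultimately show ?thesis by simp
qed

lemma moments0: "j < n \<Longrightarrow> ((\<lambda>x. x^j * legendre n x) has_integral 0) {-1..1}"
proof (induction j arbitrary: n)
  case 0
  then obtain k where "n = Suc k" by (cases n) auto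
  then show ?case using legendre_int0[of k] by simp
next
  case (Suc j)
  then obtain k where k: "n = Suc k" by (cases n) auto
  have c: "2 * real k + 3 \<noteq> 0" by linarith
  have i1: "((\<lambda>x. x^j * legendre (Suc (Suc k)) x) has_integral 0) {-1..1}"
    using Suc k by (intro Suc.IH) auto
  have i2: "((\<lambda>x. x^j * legendre k x) has_integral 0) {-1..1}"
    using Suc k by (intro Suc.IH) auto
  have "((\<lambda>x. ((real k + 2) * (x^j * legendre (Suc (Suc k)) x) + (real k + 1) * (x^j * legendre k x)) / (2 * real k + 3))
         has_integral (((real k + 2) * 0 + (real k + 1) * 0) / (2 * real k + 3))) {-1..1}"
    by (intro has_integral_divide has_integral_add has_integral_mult_right i1 i2)
  moreover have "((real k + 2) * (x^j * legendre (Suc (Suc k)) x) + (real k + 1) * (x^j * legendre k x)) / (2 * real k + 3)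
        = x ^ Suc j * legendre n x" for x
  proof -
    have r: "(real k + 2) * legendre (Suc (Suc k)) x = (2 * real k + 3) * x * legendre (Suc k) x - (real k + 1) * legendre k x"
    proof -
      have "real k + 2 \<noteq> 0" by linarith
      then show ?thesis by simp
    qed
    have "(real k + 2) * (x^j * legendre (Suc (Suc k)) x) + (real k + 1) * (x^j * legendre k x)
        = x^j * ((real k + 2) * legendre (Suc (Suc k)) x + (real k + 1) * legendre k x)"
      by (simp add: algebra_simps)
    also have "\<dots> = (2 * real k + 3) * (x ^ Suc j * legendre n x)" unfolding r k by (simp add: algebra_simps)
    finally show ?thesis using c by simp
  qed
  ultimately show ?case by simp
qed

lemma degree_Lp: "degree (Lp n) \<le> n"
proof (induction n rule: Lp.induct)
  case (3 n)
  have "degree ([:0,1:] * Lp (Suc n)) \<le> Suc (Suc n)"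
    using degree_mult_le[of "[:0,1:]" "Lp (Suc n)"] 3 by simp
  moreover have "degree (Lp n) \<le> Suc (Suc n)" using 3 by simp
  ultimately show ?case
    unfolding Lp.simps
    by (intro order.trans[OF degree_smult_le] degree_diff_le order.trans[OF degree_smult_le])
qed auto

lemma poly_orth:
  assumes "degree q < n"
  shows "((\<lambda>x. poly q x * legendre n x) has_integral 0) {-1..1}"
proof -
  have "((\<lambda>x. \<Sum>i\<le>degree q. coeff q i * (x^i * legendre n x)) has_integral (\<Sum>i\<le>degree q. coeff q i * 0)) {-1..1}"
    using assms by (intro has_integral_sum has_integral_mult_right moments0) auto
  then show ?thesis by (simp add: poly_altdef sum_distrib_right mult.assoc)
qed

definition Ep :: "nat \<Rightarrow> real poly" where
  "Ep m = smult (1 / sqrt (4 * real m - 2)) (Lp (m - 2) - Lp m)"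

lemma poly_Ep: "poly (Ep m) x = bs_eta m x"
  by (simp add: Ep_def bs_eta_def poly_Lp)

lemma degree_Ep: "degree (Ep m) \<le> m"
proof -
  have "degree (Lp (m - 2) - Lp m) \<le> m"
  proof (rule degree_diff_le)
    show "degree (Lp (m - 2)) \<le> m" using degree_Lp[of "m-2"] by linarith
  qed (rule degree_Lp)
  then show ?thesis unfolding Ep_def using degree_smult_le order.trans by blast
qed

lemma orth_term:
  assumes "k + m + 2 < n" "n \<ge> 2"
  shows "((\<lambda>x. legendre k x * bs_eta m x * bs_eta n x) has_integral 0) {-1..1}"
proof -
  define q where "q = Lp k * Ep m"
  have dq: "degree q < n - 2"
    using degree_mult_le[of "Lp k" "Ep m"] degree_Lp[of k] degree_Ep[of m] assms unfolding q_def by linarith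
  have "((\<lambda>x. (poly q x * legendre (n-2) x - poly q x * legendre n x) / sqrt (4 * real n - 2)) has_integral ((0 - 0) / sqrt (4 * real n - 2))) {-1..1}"
    using dq by (intro has_integral_divide has_integral_diff poly_orth) auto
  moreover have "(poly q x * legendre (n-2) x - poly q x * legendre n x) / sqrt (4 * real n - 2) = legendre k x * bs_eta m x * bs_eta n x" for x
    by (simp add: q_def poly_Lp poly_Ep bs_eta_def[of n] algebra_simps diff_divide_distrib)
  ultimately show ?thesis by simp
qed

lemma eta_bound:
  assumes "m \<ge> 2" "-1 \<le> x" "x \<le> 1"
  shows "\<bar>bs_eta m x\<bar> \<le> 1"
proof -
  have "\<bar>legendre (m-2) x - legendre m x\<bar> \<le> 2"
    using legendre_bound[OF assms(2,3), of "m-2"] legendre_bound[OF assms(2,3), of m] by linarith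
  moreover have "sqrt (4 * real m - 2) \<ge> 2"
  proof -
    have "sqrt 4 \<le> sqrt (4 * real m - 2)" using assms(1) by (intro real_sqrt_le_mono) simp
    then show ?thesis by simp
  qed
  moreover have p: "sqrt (4 * real m - 2) > 0" using \<open>sqrt (4 * real m - 2) \<ge> 2\<close> by linarith
  ultimately have "\<bar>legendre (m-2) x - legendre m x\<bar> / sqrt (4 * real m - 2) \<le> 1"
    by (subst divide_le_eq_1_pos[OF p]) linarith
  moreover have "\<bar>bs_eta m x\<bar> = \<bar>legendre (m-2) x - legendre m x\<bar> / sqrt (4 * real m - 2)"
    unfolding bs_eta_def abs_divide using p by simp
  ultimately show ?thesis by simp
qed

lemma tail_bound:
  fixes s :: "nat \<Rightarrow> real"
  assumes q: "0 < q" "q < 1" and hs: "\<And>k. \<bar>s k\<bar> \<le> Ce * q^k" and x: "-1 \<le> x" "x \<le> 1"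
  shows "\<bar>legendre_series s x - (\<Sum>k<K. s k * legendre k x)\<bar> \<le> Ce * q^K / (1-q)"
proof -
  define f where "f k = s k * legendre k x" for k
  have fb: "\<bar>f k\<bar> \<le> Ce * q^k" for k
  proof -
    have "\<bar>f k\<bar> = \<bar>s k\<bar> * \<bar>legendre k x\<bar>" by (simp add: f_def abs_mult)
    also have "\<dots> \<le> \<bar>s k\<bar> * 1" by (intro mult_left_mono legendre_bound x) auto
    finally show ?thesis using hs[of k] by simp
  qed
  have gs: "(\<lambda>i. Ce * q^K * q^i) sums (Ce * q^K * (1 / (1 - q)))"
    using q by (intro sums_mult geometric_sums) auto
  have sg: "summable (\<lambda>k. Ce * q^k)"
    using q by (intro summable_mult summable_geometric) auto
  have sf: "summable f"
    by (rule summable_comparison_test'[OF sg, of 0]) (use fb in auto)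
  have "legendre_series s x = (\<Sum>i. f (i + K)) + (\<Sum>k<K. f k)"
    unfolding legendre_series_def f_def[symmetric] by (rule suminf_split_initial_segment[OF sf])
  then have e: "legendre_series s x - (\<Sum>k<K. s k * legendre k x) = (\<Sum>i. f (i + K))"
    by (simp add: f_def)
  have "norm (\<Sum>i. f (i + K)) \<le> (\<Sum>i. Ce * q^K * q^i)"
  proof (rule norm_suminf_le)
    fix i show "norm (f (i + K)) \<le> Ce * q^K * q^i" using fb[of "i+K"] by (simp add: power_add mult_ac)
  qed (use gs sums_summable in blast)
  also have "\<dots> = Ce * q^K / (1-q)" using gs sums_unique by fastforce
  finally show ?thesis unfolding e by simp
qed

lemma orth_sum:
  fixes s :: "nat \<Rightarrow> real"
  assumes "m \<ge> 2" "n \<ge> 2" "K = (max m n - min m n) - 2"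
  shows "((\<lambda>x. (\<Sum>k<K. s k * legendre k x) * bs_eta m x * bs_eta n x) has_integral 0) {-1..1}"
proof -
  have t: "((\<lambda>x. legendre k x * bs_eta m x * bs_eta n x) has_integral 0) {-1..1}" if "k < K" for k
  proof (cases "m \<le> n")
    case True
    then show ?thesis using that assms by (intro orth_term) auto
  next
    case False
    have "((\<lambda>x. legendre k x * bs_eta n x * bs_eta m x) has_integral 0) {-1..1}"
      using False that assms by (intro orth_term) auto
    then show ?thesis by (rule has_integral_eq[rotated]) (simp add: mult_ac)
  qed
  have "((\<lambda>x. \<Sum>k<K. s k * (legendre k x * bs_eta m x * bs_eta n x)) has_integral (\<Sum>k<K. s k * 0)) {-1..1}"
    by (intro has_integral_sum has_integral_mult_right t) auto
  moreover have "(\<Sum>k<K. s k * (legendre k x * bs_eta m x * bs_eta n x)) = (\<Sum>k<K. s k * legendre k x) * bs_eta m x * bs_eta n x" for x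
    by (simp only: sum_distrib_right mult.assoc)
  ultimately show ?thesis by simp
qed

theorem mainTheorem3:
  fixes eta C_eta :: real
  assumes "eta > 0" and "C_eta > 0"
  shows "\<exists>C>0. \<forall>s :: nat \<Rightarrow> real.
           (\<forall>k. \<bar>s k\<bar> \<le> C_eta * exp (- eta * real k)) \<longrightarrow>
           (\<forall>m n. m \<ge> 2 \<longrightarrow> n \<ge> 2 \<longrightarrow>
              \<bar>a0 s m n\<bar> \<le> C * exp (- eta * \<bar>real n - real m\<bar>))"
proof -
  define q where "q = exp (- eta)"
  have q0: "0 < q" and q1: "q < 1" using assms(1) by (auto simp: q_def)
  have qpow: "exp (- eta * real k) = q ^ k" for k
    unfolding q_def by (simp add: exp_of_nat_mult[symmetric] mult_ac)
  define C where "C = 2 * C_eta * exp (2 * eta) / (1 - q)"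
  have Cpos: "C > 0" unfolding C_def using assms q1 by simp
  show ?thesis
  proof (intro exI[of _ C] conjI allI impI Cpos)
    fix s :: "nat \<Rightarrow> real" and m n :: nat
    assume hs0: "\<forall>k. \<bar>s k\<bar> \<le> C_eta * exp (- eta * real k)" and m: "m \<ge> 2" and n: "n \<ge> 2"
    have hs: "\<bar>s k\<bar> \<le> C_eta * q ^ k" for k using hs0 qpow by metis
    define K where "K = (max m n - min m n) - 2"
    define B where "B = C_eta * q ^ K / (1 - q)"
    have B0: "B \<ge> 0" unfolding B_def using assms q0 q1 by simp
    have KD: "real K \<ge> \<bar>real n - real m\<bar> - 2" unfolding K_def by (cases "m \<le> n") auto
    have key: "2 * B \<le> C * exp (- eta * \<bar>real n - real m\<bar>)"
    proof -
      have "q ^ K = exp (- eta * real K)" using qpow[of K] by simp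
      also have "\<dots> \<le> exp (2 * eta + (- eta * \<bar>real n - real m\<bar>))"
      proof -
        have "eta * (\<bar>real n - real m\<bar> - 2) \<le> eta * real K"
          using KD assms(1) by (intro mult_left_mono) auto
        then have "- eta * real K \<le> 2 * eta + (- eta * \<bar>real n - real m\<bar>)"
          by (simp add: right_diff_distrib)
        then show ?thesis by simp
      qed
      also have "\<dots> = exp (2 * eta) * exp (- eta * \<bar>real n - real m\<bar>)" by (rule exp_add)
      finally have "q ^ K \<le> exp (2 * eta) * exp (- eta * \<bar>real n - real m\<bar>)" .
      then have "2 * C_eta * q ^ K / (1 - q) \<le> 2 * C_eta * (exp (2 * eta) * exp (- eta * \<bar>real n - real m\<bar>)) / (1 - q)"
        using assms q1 by (intro divide_right_mono mult_left_mono) auto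
      then show ?thesis unfolding B_def C_def by (simp add: mult_ac)
    qed
    define F where "F x = legendre_series s x * bs_eta m x * bs_eta n x" for x
    define G where "G x = (\<Sum>k<K. s k * legendre k x) * bs_eta m x * bs_eta n x" for x
    show "\<bar>a0 s m n\<bar> \<le> C * exp (- eta * \<bar>real n - real m\<bar>)"
    proof (cases "F integrable_on {-1..1}")
      case False
      then have "a0 s m n = 0" unfolding a0_def F_def[symmetric] by (rule not_integrable_integral)
      then show ?thesis using Cpos by simp
    next
      case True
      have G0: "(G has_integral 0) {-1..1}" unfolding G_def using m n K_def by (intro orth_sum) auto
      have H: "((\<lambda>x. F x - G x) has_integral (integral {-1..1} F - 0)) {-1..1}"
        using True G0 by (intro has_integral_diff) (auto simp: has_integral_integrable_integral)
      have Hb: "norm (F x - G x) \<le> B" if "x \<in> cbox (-1) 1" for x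
      proof -
        have x: "-1 \<le> x" "x \<le> 1" using that by auto
        have "F x - G x = (legendre_series s x - (\<Sum>k<K. s k * legendre k x)) * bs_eta m x * bs_eta n x"
          unfolding F_def G_def by (simp add: algebra_simps)
        then have "\<bar>F x - G x\<bar> = \<bar>legendre_series s x - (\<Sum>k<K. s k * legendre k x)\<bar> * \<bar>bs_eta m x\<bar> * \<bar>bs_eta n x\<bar>"
          by (simp add: abs_mult)
        also have "\<dots> \<le> B * 1 * 1"
        proof -
          have t: "\<bar>legendre_series s x - (\<Sum>k<K. s k * legendre k x)\<bar> \<le> B"
            unfolding B_def by (rule tail_bound[OF q0 q1 hs x])
          have e1: "\<bar>bs_eta m x\<bar> \<le> 1" by (rule eta_bound[OF m x])
          have e2: "\<bar>bs_eta n x\<bar> \<le> 1" by (rule eta_bound[OF n x])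
          show ?thesis
            by (rule mult_mono[OF mult_mono[OF t e1]]) (use e2 B0 in auto)
        qed
        finally show ?thesis by simp
      qed
      have H': "((\<lambda>x. F x - G x) has_integral (integral {-1..1} F - 0)) (cbox (-1) 1)"
        using H by simp
      have "norm (integral {-1..1} F - 0) \<le> B * 2"
        using has_integral_bound[OF B0 H' Hb] by simp
      then have "\<bar>a0 s m n\<bar> \<le> 2 * B"
        unfolding a0_def F_def[symmetric] by (simp add: mult.commute)
      then show ?thesis using key by linarith
    qed
  qed
qed

end
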